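(* Let $N\ge 2$, $h\ge 1$, $\Lambda\ge 1$ be integers, and let $f(X)\in\mathbb{F}_2[X]$ be a nonzero polynomial of degree at most $N h\Lambda\lceil\log N\rceil$ (logarithms base $2$). Consider the following procedure: for $i=1,2,\dots,\lceil\log N\rceil$ in order, compute $r_i(X)=f(X)\bmod (X^{2^i}+X)$, stopping at the first index $j$ for which $r_j(X)\neq 0$ (assume such $j\le\lceil\log N\rceil$ exists); then, with $\tilde f(X)=f(X)\bmod(X^{2^j}+X)$, divide $\tilde f(X)$ by the irreducible polynomials of degree $j$ over $\mathbb{F}_2$ until one is found that is coprime with $\tilde f(X)$ (equivalently with $f(X)$), and output it. The total complexity (number of field operations) of this procedure is at most $O(N^2)+O\big(hN(\log N)^2\Lambda\big)$.
   Context: All polynomials are over $\mathbb{F}_2$. Division of two polynomials, one of degree $w$, is assumed to cost $O(w\log w)$ operations. For each $i$, $X^{2^i}+X$ is the product of all irreducible binary polynomials whose degree divides $i$. *)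

theory Defs
  imports "Berlekamp_Zassenhaus.Finite_Field" "HOL-Computational_Algebra.Polynomial"
begin

type_synonym gf2 = "bool mod_ring"

definition frob_mod :: "nat \<Rightarrow> gf2 poly" where
  "frob_mod i = monom 1 (2 ^ i) + monom 1 1"

definition clog :: "nat \<Rightarrow> nat" where
  "clog N = nat \<lceil>log 2 (real N)\<rceil>"

definition stop_index :: "gf2 poly \<Rightarrow> nat" where
  "stop_index f = (LEAST i. 1 \<le> i \<and> f mod frob_mod i \<noteq> 0)"

text \<open>Number of irreducible polynomials tried in the second phase, when they are tried
  in the order of the list ps: all those dividing ftil, plus the first coprime one.\<close>
definition num_trials :: "gf2 poly list \<Rightarrow> gf2 poly \<Rightarrow> nat" where
  "num_trials ps ftil = length (takeWhile (\<lambda>p. p dvd ftil) ps) + 1"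

text \<open>Total cost of the procedure. redcost d: cost of reducing a polynomial of degree d
  modulo X^(2^i)+X; divcost w: cost of a division in which the larger degree is w.
  Phase 1 performs j reductions of f; phase 2 performs one division of ftil
  (degree < 2^j) by an irreducible of degree j per trial.\<close>
definition proc_cost ::
  "(nat \<Rightarrow> real) \<Rightarrow> (nat \<Rightarrow> real) \<Rightarrow> gf2 poly list \<Rightarrow> gf2 poly \<Rightarrow> real" where
  "proc_cost redcost divcost ps f =
     (let j = stop_index f; ftil = f mod frob_mod j in
       (\<Sum>i=1..j. redcost (degree f)) + real (num_trials ps ftil) * divcost (2 ^ j))"

end

theory Submission
  imports Defs
begin


lemma gf2_nz: "(a::gf2) \<noteq> 0 \<Longrightarrow> a = 1"
proof -
  assume a: "a \<noteq> 0"
  have "card (UNIV :: gf2 set) = 2" by simp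
  then obtain x y where xy: "(UNIV :: gf2 set) = {x, y}" "x \<noteq> y" using \<open>card (UNIV :: gf2 set) = 2\<close> by (metis card_2_iff)
  have "(0::gf2) \<noteq> 1" by simp
  moreover have "(0::gf2) \<in> {x,y}" "(1::gf2) \<in> {x,y}" "a \<in> {x,y}" using xy by auto
  ultimately show "a = 1" using a by auto
qed

lemma log_lt: assumes "N \<ge> 1" shows "log 2 (real N) < real N"
proof -
  have False: "N \<noteq> 0" using assms by simp
  have "real N < 2 ^ N" using less_exp[of N] by (metis of_nat_less_iff of_nat_numeral of_nat_power)
  then have "log 2 (real N) < log 2 (2 ^ N)" using False by (subst log_less_cancel_iff) auto
  then show ?thesis by (simp add: log_nat_power)
qed

lemma dvd_same_deg: assumes "p dvd q" "q \<noteq> 0" "degree p = degree q" shows "(q::gf2 poly) = p"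
proof -
  obtain r where r: "q = p * r" using assms(1) by blast
  have "p \<noteq> 0" "r \<noteq> 0" using r assms(2) by auto
  then have "degree r = 0" using r assms(3) by (simp add: degree_mult_eq)
  then obtain a where "r = [:a:]" by (meson degree_eq_zeroE)
  with \<open>r \<noteq> 0\<close> have "r = 1" using gf2_nz by (auto simp: one_pCons)
  then show ?thesis using r by simp
qed

lemma prod_dvd: "distinct ps \<Longrightarrow> \<forall>p\<in>set ps. irreducible p \<and> degree p = j \<and> p dvd g \<Longrightarrow> prod_list ps dvd (g :: gf2 poly)"
proof (induction ps)
  case Nil then show ?case by simp
next
  case (Cons p ps)
  have ih: "prod_list ps dvd g" using Cons by auto
  have pp: "prime_elem p" using Cons.prems(2) by (simp add: irreducible_imp_prime_elem)
  have "\<not> p dvd prod_list ps"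
  proof
    assume "p dvd prod_list ps"
    then obtain q where q: "q \<in> set ps" "p dvd q" using prime_elem_dvd_prod_list pp by blast
    have "q \<noteq> 0" using Cons.prems(2) q(1) by auto
    then have "q = p" using dvd_same_deg[OF q(2)] Cons.prems(2) q(1) by auto
    then show False using Cons.prems(1) q(1) by auto
  qed
  then have "coprime p (prod_list ps)" using pp by (simp add: prime_elem_imp_coprime)
  then show ?case using ih Cons.prems(2) by (simp add: divides_mult)
qed

lemma len_bound: assumes "distinct ps" "\<forall>p\<in>set ps. irreducible p \<and> degree p = j \<and> p dvd g" "(g::gf2 poly) \<noteq> 0"
  shows "length ps * j \<le> degree g"
proof -
  have "prod_list ps dvd g" using prod_dvd assms by blast
  then have "degree (prod_list ps) \<le> degree g" using assms(3) by (simp add: dvd_imp_degree_le)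
  moreover have "degree (prod_list ps) = sum_list (map degree ps)"
    using assms(2) by (intro degree_prod_list_eq) auto
  moreover have "sum_list (map degree ps) = length ps * j" using assms(2) by (induction ps) auto
  ultimately show ?thesis by simp
qed

lemma deg_frob: assumes "j \<ge> 1" shows "degree (frob_mod j) = 2 ^ j"
proof -
  have "(1::nat) < 2 ^ j" using assms by (intro one_less_power) auto
  then show ?thesis unfolding frob_mod_def
    by (subst degree_add_eq_left) (auto simp: degree_monom_eq)
qed

lemma clog_bounds: assumes "N \<ge> 2"
  shows "real (clog N) \<le> 2 * log 2 (real N)" "real (2 ^ clog N) \<le> 2 * real N"
    "1 \<le> log 2 (real N)"
proof -
  define L where "L = log 2 (real N)"
  have L1: "1 \<le> L" unfolding L_def using assms by simp
  have c: "real (clog N) = of_int \<lceil>L\<rceil>" unfolding clog_def L_def using L1 L_def by simp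
  have c2: "real (clog N) \<le> L + 1" using c by linarith
  show "real (clog N) \<le> 2 * log 2 (real N)" using c2 L1 L_def by simp
  have "real (2 ^ clog N) = 2 powr real (clog N)" by (simp add: powr_realpow)
  also have "\<dots> \<le> 2 powr (L + 1)" using c2 by (intro powr_mono) auto
  also have "\<dots> = 2 * real N" unfolding L_def using assms by (simp add: powr_add)
  finally show "real (2 ^ clog N) \<le> 2 * real N" .
  show "1 \<le> log 2 (real N)" using L1 L_def by simp
qed

theorem proposition1:
  fixes c :: real
  assumes "c > 0"
  shows "\<exists>K. \<forall>(redcost :: nat \<Rightarrow> real) (divcost :: nat \<Rightarrow> real)
            (N :: nat) (h :: nat) (\<Lambda> :: nat) (f :: gf2 poly) (ps :: gf2 poly list).
     (\<forall>d. redcost d \<le> c * (real d + 1)) \<longrightarrow>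
     (\<forall>w. 2 \<le> w \<longrightarrow> divcost w \<le> c * real w * log 2 (real w)) \<longrightarrow>
     N \<ge> 2 \<longrightarrow> h \<ge> 1 \<longrightarrow> \<Lambda> \<ge> 1 \<longrightarrow>
     f \<noteq> 0 \<longrightarrow> degree f \<le> N * h * \<Lambda> * clog N \<longrightarrow>
     (\<exists>j\<in>{1..clog N}. f mod frob_mod j \<noteq> 0) \<longrightarrow>
     distinct ps \<longrightarrow>
     set ps = {p. irreducible p \<and> degree p = stop_index f} \<longrightarrow>
     proc_cost redcost divcost ps f
       \<le> K * (real N ^ 2 + real h * real N * (log 2 (real N))\<^sup>2 * real \<Lambda>)"
  proof (intro exI[of _ "10 * c"] allI impI)
  fix redcost divcost :: "nat \<Rightarrow> real" and N h \<Lambda> :: nat and f :: "gf2 poly" and ps :: "gf2 poly list"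
  assume rc: "\<forall>d. redcost d \<le> c * (real d + 1)"
    and dc: "\<forall>w. 2 \<le> w \<longrightarrow> divcost w \<le> c * real w * log 2 (real w)"
    and N2: "N \<ge> 2" and h1: "h \<ge> 1" and L1: "\<Lambda> \<ge> 1" and f0: "f \<noteq> 0"
    and degf: "degree f \<le> N * h * \<Lambda> * clog N"
    and ex: "\<exists>j\<in>{1..clog N}. f mod frob_mod j \<noteq> 0"
    and dist: "distinct ps"
    and sps: "set ps = {p. irreducible p \<and> degree p = stop_index f}"
  define j where "j = stop_index f"
  obtain j0 where j0: "j0 \<in> {1..clog N}" "f mod frob_mod j0 \<noteq> 0" using ex by blast
  have hj: "1 \<le> j \<and> f mod frob_mod j \<noteq> 0" unfolding j_def stop_index_def
    by (rule LeastI[of _ j0]) (use j0 in auto)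
  have "j \<le> j0" unfolding j_def stop_index_def by (rule Least_le) (use j0 in auto)
  then have jc: "j \<le> clog N" using j0 by auto
  define ftil where "ftil = f mod frob_mod j"
  have ft0: "ftil \<noteq> 0" using hj ftil_def by simp
  have "frob_mod j \<noteq> 0" using deg_frob[of j] hj by (metis degree_0 power_not_zero zero_neq_numeral)
  then have degft: "degree ftil < 2 ^ j" using degree_mod_less'[of "frob_mod j" f] hj deg_frob[of j]
    unfolding ftil_def by simp
  define tw where "tw = takeWhile (\<lambda>p. p dvd ftil) ps"
  define m where "m = length tw"
  have "m * j \<le> degree ftil" unfolding m_def
  proof (rule len_bound[OF _ _ ft0])
    show "distinct tw" unfolding tw_def using dist by (simp add: distinct_takeWhile)
    show "\<forall>p\<in>set tw. irreducible p \<and> degree p = j \<and> p dvd ftil"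
      unfolding tw_def using sps j_def by (auto dest: set_takeWhileD)
  qed
  then have mj: "m * j < 2 ^ j" using degft by simp
  have nt: "num_trials ps ftil = m + 1" unfolding num_trials_def m_def tw_def by simp
  have pc: "proc_cost redcost divcost ps f = real j * redcost (degree f) + real (m + 1) * divcost (2 ^ j)"
    unfolding proc_cost_def Let_def j_def[symmetric] ftil_def[symmetric] nt by simp
  define L where "L = log 2 (real N)"
  define J where "J = real j"
  define P where "P = real ((2::nat) ^ j)"
  define M where "M = real m"
  define D where "D = real (degree f)"
  have Lge: "1 \<le> L" using clog_bounds(3)[OF N2] L_def by simp
  have LN: "L \<le> real N" using log_lt[of N] N2 L_def by simp
  have J1: "1 \<le> J" using hj J_def by simp
  have J2: "J \<le> 2 * L" using clog_bounds(1)[OF N2] jc J_def L_def by simp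
  have "P \<le> real (2 ^ clog N)" unfolding P_def using jc by simp
  then have P2: "P \<le> 2 * real N" using clog_bounds(2)[OF N2] by simp
  have P0: "0 \<le> P" using P_def by simp
  have MJ: "M * J \<le> P" using mj unfolding M_def J_def P_def
    by (metis less_imp_le of_nat_le_iff of_nat_mult)
  have M0: "0 \<le> M" using M_def by simp
  have D1: "D \<le> real N * real h * real \<Lambda> * (2 * L)"
  proof -
    have "D \<le> real N * real h * real \<Lambda> * real (clog N)" using degf D_def
      by (metis of_nat_le_iff of_nat_mult)
    also have "\<dots> \<le> real N * real h * real \<Lambda> * (2 * L)"
      using clog_bounds(1)[OF N2] L_def by (intro mult_left_mono) auto
    finally show ?thesis .
  qed
  define H where "H = real N * real h * real \<Lambda>"
  have "real N * 1 * 1 \<le> H" unfolding H_def using h1 L1 by (intro mult_mono) auto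
  then have H1: "real N \<le> H" by simp
  have cost1: "real j * redcost (degree f) \<le> c * (2 * L) * (H * (2 * L) + 1)"
  proof -
    have "real j * redcost (degree f) \<le> J * (c * (D + 1))"
      unfolding J_def D_def using rc by (intro mult_left_mono) auto
    also have "\<dots> \<le> (2 * L) * (c * (H * (2 * L) + 1))"
      using J2 D1 \<open>c > 0\<close> J1 H_def by (intro mult_mono) (auto simp: D_def)
    finally show ?thesis by (simp add: mult_ac)
  qed
  have dv: "divcost (2 ^ j) \<le> c * P * J"
  proof -
    have "2 \<le> (2::nat) ^ j" using power_increasing[of 1 j "2::nat"] hj by simp
    then have "divcost (2 ^ j) \<le> c * real (2 ^ j) * log 2 (real ((2::nat) ^ j))" using dc by blast
    then show ?thesis by (simp add: P_def J_def log_nat_power)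
  qed
  have cost2: "real (m + 1) * divcost (2 ^ j) \<le> c * P * P + c * (2 * L) * (2 * real N)"
  proof -
    have "real (m + 1) * divcost (2 ^ j) \<le> real (m + 1) * (c * P * J)"
      using dv by (intro mult_left_mono) auto
    also have "\<dots> = (M + 1) * (c * P * J)" by (simp add: M_def)
    also have "\<dots> = c * P * (M * J) + c * J * P" by (simp add: algebra_simps)
    also have "\<dots> \<le> c * P * P + c * (2 * L) * (2 * real N)"
    proof (intro add_mono)
      show "c * P * (M * J) \<le> c * P * P" using MJ P0 \<open>c > 0\<close> by (intro mult_left_mono) auto
      show "c * J * P \<le> c * (2 * L) * (2 * real N)" using J2 P2 J1 P0 \<open>c > 0\<close>
        by (intro mult_mono mult_left_mono) auto
    qed
    finally show ?thesis .
  qed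
  have "P * P \<le> (2 * real N) * (2 * real N)" using P2 P0 by (intro mult_mono) auto
  then have PP: "P * P \<le> 4 * (real N)^2" by (simp add: power2_eq_square)
  have e1: "L * real N \<le> (real N)^2" using LN by (simp add: power2_eq_square mult_right_mono)
  have "real N * 1 \<le> real N * real N" using N2 by (intro mult_left_mono) auto
  then have e2: "L \<le> (real N)^2" using LN by (simp add: power2_eq_square)
  have e3: "H * L * L = real h * real N * L\<^sup>2 * real \<Lambda>" by (simp add: H_def power2_eq_square)
  have HLL0: "0 \<le> H * L * L" using H1 Lge by simp
  have "proc_cost redcost divcost ps f \<le> c * (2 * L) * (H * (2 * L) + 1) + (c * P * P + c * (2 * L) * (2 * real N))"
    using pc cost1 cost2 by simp
  also have "\<dots> = c * (4 * (H * L * L) + 2 * L + P * P + 4 * (L * real N))" by (simp add: algebra_simps)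
  also have "\<dots> \<le> c * (4 * (H * L * L) + 2 * (real N)^2 + 4 * (real N)^2 + 4 * (real N)^2)"
    using e1 e2 PP \<open>c > 0\<close> by (intro mult_left_mono) auto
  also have "\<dots> \<le> c * (10 * ((real N)^2 + H * L * L))"
    using HLL0 \<open>c > 0\<close> by (intro mult_left_mono) auto
  also have "\<dots> = 10 * c * (real N ^ 2 + real h * real N * (log 2 (real N))\<^sup>2 * real \<Lambda>)"
    using e3 L_def by simp
  finally show "proc_cost redcost divcost ps f \<le> 10 * c * (real N ^ 2 + real h * real N * (log 2 (real N))\<^sup>2 * real \<Lambda>)" .
qed

end
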